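(* Consider the following random variables, all defined on a common probability space (one draw from a superpopulation): a binary decision (plan) variable $P\in\{0,1\}$; a binary treatment at time 2, $A_2\in\{0,1\}$; real-valued outcomes $Y_1,Y_2$ with finite expectations; and, for $p^*\in\{0,1\}$, potential outcomes $Y_1^{p=p^*}, Y_2^{p=p^*}, A_2^{p=p^*}$ (values had $P$ been set to $p^*$). Suppose that: (i) $\Pr(A_2=a^* )>0$ for every $a^*\in\{0,1\}$; (ii) $A_2^{p=p^*}=p^*$ for every $p^*\in\{0,1\}$; (iii) $\mathbb{E}(Y_1^{p=1}\mid P=1)=\mathbb{E}(Y_1^{p=0}\mid P=1)$; (iv) $\mathbb{E}(Y_2^{p=0}-Y_1^{p=0}\mid P=1)=\mathbb{E}(Y_2^{p=0}-Y_1^{p=0}\mid P=0)$; (v) for each $p^*\in\{0,1\}$: $Y_1^{p=p^*}=Y_1$, $Y_2^{p=p^*}=Y_2$ and $A_2^{p=p^*}=A_2$ on the event $\{P=p^*\}$. Then \[ATT_P=\{\mathbb{E}(Y_2\mid A_2=1)-\mathbb{E}(Y_1\mid A_2=1)\}-\{\mathbb{E}(Y_2\mid A_2=0)-\mathbb{E}(Y_1\mid A_2=0)\},\] where $ATT_P=\mathbb{E}(Y_2^{p=1}-Y_2^{p=0}\mid P=1)$.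
   Context: Difference-in-differences setting with two time points. Superscripts denote potential outcomes (counterfactual values under a hypothetical intervention fixing $P$ to the indicated value). $P$ represents the decision/plan to implement a policy, $A_2$ its implementation at time 2 (no unit is treated at time 1), and $Y_1,Y_2$ the outcome measured at times 1 and 2. *)

theory Defs
  imports "HOL-Probability.Probability"
begin

definition cond_exp_ev :: "'a measure \<Rightarrow> ('a \<Rightarrow> real) \<Rightarrow> 'a set \<Rightarrow> real" where
  "cond_exp_ev M X B = (\<integral>x. indicator B x * X x \<partial>M) / measure M B"

end

theory Submission
  imports Defs
begin

lemma cev_cong:
  assumes "\<And>x. x \<in> S \<Longrightarrow> f x = g x" "S \<subseteq> space M"
  shows "cond_exp_ev M f S = cond_exp_ev M g S"
  unfolding cond_exp_ev_def
proof -
  have "(\<integral>x. indicator S x * f x \<partial>M) = (\<integral>x. indicator S x * g x \<partial>M)"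
    by (rule Bochner_Integration.integral_cong) (auto simp: assms split: split_indicator)
  then show "(\<integral>x. indicator S x * f x \<partial>M) / measure M S = (\<integral>x. indicator S x * g x \<partial>M) / measure M S"
    by simp
qed

lemma cev_diff:
  fixes f g :: "'a \<Rightarrow> real"
  assumes "S \<in> sets M" "integrable M f" "integrable M g"
  shows "cond_exp_ev M (\<lambda>x. f x - g x) S = cond_exp_ev M f S - cond_exp_ev M g S"
proof -
  have i1: "integrable M (\<lambda>x. indicator S x * f x)"
    using integrable_real_mult_indicator[OF assms(1,2)] by (simp add: mult.commute)
  have i2: "integrable M (\<lambda>x. indicator S x * g x)"
    using integrable_real_mult_indicator[OF assms(1,3)] by (simp add: mult.commute)
  have "(\<integral>x. indicator S x * (f x - g x) \<partial>M) = (\<integral>x. indicator S x * f x - indicator S x * g x \<partial>M)"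
    by (simp add: right_diff_distrib)
  also have "\<dots> = (\<integral>x. indicator S x * f x \<partial>M) - (\<integral>x. indicator S x * g x \<partial>M)"
    using i1 i2 by (rule Bochner_Integration.integral_diff)
  finally show ?thesis unfolding cond_exp_ev_def by (simp add: diff_divide_distrib)
qed

theorem proposition2:
  fixes M :: "'a measure"
    and P A2 :: "'a \<Rightarrow> nat"
    and Y1 Y2 :: "'a \<Rightarrow> real"
    and Y1p Y2p :: "nat \<Rightarrow> 'a \<Rightarrow> real"
    and A2p :: "nat \<Rightarrow> 'a \<Rightarrow> nat"
  assumes ps: "prob_space M"
    and P_meas: "P \<in> measurable M (count_space UNIV)"
    and A2_meas: "A2 \<in> measurable M (count_space UNIV)"
    and P_bin: "\<forall>x\<in>space M. P x \<in> {0, 1}"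
    and A2_bin: "\<forall>x\<in>space M. A2 x \<in> {0, 1}"
    and Y1_int: "integrable M Y1"
    and Y2_int: "integrable M Y2"
    and Y1p_int: "\<forall>p\<in>{0,1}. integrable M (Y1p p)"
    and Y2p_int: "\<forall>p\<in>{0,1}. integrable M (Y2p p)"
    and i: "\<forall>a\<in>{0::nat,1}. measure M {x\<in>space M. A2 x = a} > 0"
    and ii: "\<forall>p\<in>{0,1}. \<forall>x\<in>space M. A2p p x = p"
    and iii: "cond_exp_ev M (Y1p 1) {x\<in>space M. P x = 1}
            = cond_exp_ev M (Y1p 0) {x\<in>space M. P x = 1}"
    and iv: "cond_exp_ev M (\<lambda>x. Y2p 0 x - Y1p 0 x) {x\<in>space M. P x = 1}
           = cond_exp_ev M (\<lambda>x. Y2p 0 x - Y1p 0 x) {x\<in>space M. P x = 0}"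
    and v: "\<forall>p\<in>{0,1}. \<forall>x\<in>space M. P x = p \<longrightarrow>
              Y1p p x = Y1 x \<and> Y2p p x = Y2 x \<and> A2p p x = A2 x"
  shows "cond_exp_ev M (\<lambda>x. Y2p 1 x - Y2p 0 x) {x\<in>space M. P x = 1}
       = (cond_exp_ev M Y2 {x\<in>space M. A2 x = 1} - cond_exp_ev M Y1 {x\<in>space M. A2 x = 1})
       - (cond_exp_ev M Y2 {x\<in>space M. A2 x = 0} - cond_exp_ev M Y1 {x\<in>space M. A2 x = 0})"
  proof -
  have AP: "\<And>x. x \<in> space M \<Longrightarrow> A2 x = P x"
  proof -
    fix x assume x: "x \<in> space M"
    then have "P x \<in> {0,1}" using P_bin by auto
    then show "A2 x = P x" using ii v x by auto
  qed
  define S1 where "S1 = {x\<in>space M. P x = 1}"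
  define S0 where "S0 = {x\<in>space M. P x = 0}"
  have E1: "{x\<in>space M. A2 x = 1} = S1" using AP unfolding S1_def by auto
  have E0: "{x\<in>space M. A2 x = 0} = S0" using AP unfolding S0_def by auto
  have S1m: "S1 \<in> sets M" unfolding S1_def using P_meas by measurable
  have S0m: "S0 \<in> sets M" unfolding S0_def using P_meas by measurable
  have Y10: "integrable M (Y1p 0)" and Y11: "integrable M (Y1p 1)"
    and Y20: "integrable M (Y2p 0)" and Y21: "integrable M (Y2p 1)"
    using Y1p_int Y2p_int by auto
  have a: "cond_exp_ev M (\<lambda>x. Y2p 1 x - Y2p 0 x) S1 = cond_exp_ev M (Y2p 1) S1 - cond_exp_ev M (Y2p 0) S1"
    using cev_diff[OF S1m Y21 Y20] .
  have b: "cond_exp_ev M (Y2p 1) S1 = cond_exp_ev M Y2 S1"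
    by (rule cev_cong) (use v in \<open>auto simp: S1_def\<close>)
  have c: "cond_exp_ev M (\<lambda>x. Y2p 0 x - Y1p 0 x) S1 = cond_exp_ev M (Y2p 0) S1 - cond_exp_ev M (Y1p 0) S1"
    using cev_diff[OF S1m Y20 Y10] .
  have d: "cond_exp_ev M (\<lambda>x. Y2p 0 x - Y1p 0 x) S0 = cond_exp_ev M (\<lambda>x. Y2 x - Y1 x) S0"
    by (rule cev_cong) (use v in \<open>auto simp: S0_def\<close>)
  have e: "cond_exp_ev M (\<lambda>x. Y2 x - Y1 x) S0 = cond_exp_ev M Y2 S0 - cond_exp_ev M Y1 S0"
    using cev_diff[OF S0m Y2_int Y1_int] .
  have f: "cond_exp_ev M (Y1p 1) S1 = cond_exp_ev M Y1 S1"
    by (rule cev_cong) (use v in \<open>auto simp: S1_def\<close>)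
  show ?thesis
    unfolding E1 E0 using a b c d e f iii iv unfolding S1_def[symmetric] S0_def[symmetric]
    by linarith
qed

end
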